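(* Let $x\ge3$ be a fixed integer. Let $\omega_n^-(x)$ be the number of square-free words of length $n$ over an $x$-letter alphabet, and $\psi_n(x)$ the number of those which contain every one of the $x$ letters. Then $$\lim_{n\to\infty}\frac{\log\psi_n(x)}{n}=\lim_{n\to\infty}\frac{\log\omega_n^-(x)}{n}.$$
   Context: A square is a nonempty word of the form $uu$; a word is square-free if no contiguous subword of it is a square. *)

theory Defs
  imports Complex_Main
begin

definition square_free :: "'a list \<Rightarrow> bool" where
  "square_free w \<longleftrightarrow> \<not> (\<exists>p u s. u \<noteq> [] \<and> w = p @ u @ u @ s)"

definition omega_minus :: "nat \<Rightarrow> nat \<Rightarrow> nat" where
  "omega_minus x n = card {w :: nat list. length w = n \<and> set w \<subseteq> {..<x} \<and> square_free w}"

definition psi :: "nat \<Rightarrow> nat \<Rightarrow> nat" where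
  "psi x n = card {w :: nat list. length w = n \<and> set w = {..<x} \<and> square_free w}"

end

theory Submission
  imports Defs
begin

lemma fekete:
  fixes a :: "nat \<Rightarrow> real"
  assumes sub: "\<And>m n. a (m+n) \<le> a m + a n" and nn: "\<And>n. a n \<ge> 0"
  shows "\<exists>L. (\<lambda>n. a n / real n) \<longlonglongrightarrow> L"
proof -
  define S where "S = (\<lambda>n. a n / real n) ` {1..}"
  define L where "L = Inf S"
  have bdd: "bdd_below S" unfolding S_def by (rule bdd_belowI[of _ 0]) (auto intro!: divide_nonneg_nonneg nn)
  have ne: "S \<noteq> {}" unfolding S_def by auto
  have low: "L \<le> a n / real n" if "n \<ge> 1" for n
    unfolding L_def using that bdd by (auto simp: S_def intro!: cInf_lower)
  have iter: "a (q*k + r) \<le> real q * a k + a r" for q k r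
  proof (induction q)
    case 0 then show ?case by simp
  next
    case (Suc q)
    have "a (Suc q * k + r) = a (k + (q*k+r))" by (simp add: algebra_simps)
    also have "\<dots> \<le> a k + a (q*k+r)" by (rule sub)
    finally show ?case using Suc by (simp add: algebra_simps)
  qed
  have "(\<lambda>n. a n / real n) \<longlonglongrightarrow> L"
  proof (rule LIMSEQ_I)
    fix e :: real assume e: "e > 0"
    have "Inf S < L + e/2" using e by (simp add: L_def)
    then obtain s where "s \<in> S" "s < L + e/2" using cInf_less_iff[OF ne bdd] by auto
    then obtain k where k: "k \<ge> 1" "a k / real k < L + e/2" unfolding S_def by auto
    define M where "M = (\<Sum>r<k. a r)"
    have M0: "M \<ge> 0" unfolding M_def by (intro sum_nonneg nn)
    obtain N :: nat where N: "real N > 2*M/e" using reals_Archimedean2 by blast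
    show "\<exists>no. \<forall>n\<ge>no. norm (a n / real n - L) < e"
    proof (intro exI allI impI)
      fix n assume n: "n \<ge> Suc N"
      have npos: "real n > 0" using n by simp
      define q where "q = n div k"
      define r where "r = n mod k"
      have nq: "n = q*k + r" unfolding q_def r_def by simp
      have rk: "r < k" unfolding r_def using k by simp
      have ar: "a r \<le> M" unfolding M_def using rk by (intro member_le_sum nn) auto
      have qk: "real q * real k \<le> real n" using nq by (metis le_add1 of_nat_le_iff of_nat_mult)
      have "a n \<le> real q * a k + M" using iter[of q k r] ar nq by simp
      also have "real q * a k = (real q * real k) * (a k / real k)" using k by simp
      also have "\<dots> \<le> real n * (a k / real k)"
        using qk nn[of k] k by (intro mult_right_mono) auto
      finally have "a n / real n \<le> (real n * (a k / real k) + M) / real n"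
        using npos by (simp add: divide_right_mono)
      also have "\<dots> = a k / real k + M / real n" using npos by (simp add: field_simps)
      also have "M / real n < e/2"
      proof -
        have "real n > 2*M/e" using N n by simp
        then have "2*M < real n * e" using e by (simp add: field_simps)
        then show ?thesis using npos by (simp add: field_simps)
      qed
      finally have up: "a n / real n < L + e" using k by simp
      have "L \<le> a n / real n" using n by (intro low) simp
      then show "norm (a n / real n - L) < e" using up by simp
    qed
  qed
  then show ?thesis by blast
qed



lemma sf_factor: "square_free (a @ w @ b) \<Longrightarrow> square_free w"
  unfolding square_free_def by (metis append.assoc)

lemma sf_take: "square_free v \<Longrightarrow> square_free (take k v)"
  using sf_factor[of "[]" "take k v" "drop k v"] by simp

lemma sf_prefix_distinct:
  assumes d: "distinct a" and dis: "set a \<inter> set w = {}" and sw: "square_free w"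
  shows "square_free (a @ w)"
  unfolding square_free_def
proof
  assume "\<exists>p u s. u \<noteq> [] \<and> a @ w = p @ u @ u @ s"
  then obtain p u s where u: "u \<noteq> []" and eq: "a @ w = p @ u @ u @ s" by blast
  show False
  proof (cases "length a \<le> length p")
    case True
    then obtain p' where "p = a @ p'" "w = p' @ u @ u @ s" using eq
      by (metis append_eq_append_conv_if append_eq_conv_conj)
    then show False using sw u unfolding square_free_def by blast
  next
    case False
    define i where "i = length p"
    define c where "c = u ! 0"
    have ia: "i < length a" using False i_def by simp
    have e1: "(a @ w) ! i = c" unfolding eq i_def c_def using u by (simp add: nth_append)
    have e2: "(a @ w) ! (i + length u) = c" unfolding eq i_def c_def using u by (simp add: nth_append)
    have ca: "a ! i = c" using e1 ia by (simp add: nth_append)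
    show False
    proof (cases "i + length u < length a")
      case True
      then have "a ! (i + length u) = c" using e2 by (simp add: nth_append)
      then have "i = i + length u" using ca d ia True nth_eq_iff_index_eq by metis
      then show False using u by simp
    next
      case F2: False
      have lt: "i + length u < length (a @ w)" unfolding eq i_def using u by simp
      have "w ! (i + length u - length a) = c" using e2 F2 by (simp add: nth_append)
      moreover have "i + length u - length a < length w" using lt F2 by simp
      ultimately have "c \<in> set w" by (metis nth_mem)
      moreover have "c \<in> set a" using ca ia by (metis nth_mem)
      ultimately show False using dis by blast
    qed
  qed
qed

lemma fin_words: "finite {w :: nat list. length w = n \<and> set w \<subseteq> {..<x} \<and> P w}"
proof -
  have "finite {w :: nat list. set w \<subseteq> {..<x} \<and> length w = n}"
    by (rule finite_lists_length_eq) simp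
  then show ?thesis by (rule finite_subset[rotated]) auto
qed

lemma psi_le_omega: "psi x n \<le> omega_minus x n"
  unfolding psi_def omega_minus_def by (rule card_mono[OF fin_words]) auto

lemma omega_zero_mono:
  assumes "omega_minus x n = 0" "n \<le> m" shows "omega_minus x m = 0"
proof (rule ccontr)
  assume "omega_minus x m \<noteq> 0"
  then obtain v where v: "length v = m" "set v \<subseteq> {..<x}" "square_free v"
    unfolding omega_minus_def by (metis (mono_tags, lifting) card.empty empty_Collect_eq)
  have "take n v \<in> {w :: nat list. length w = n \<and> set w \<subseteq> {..<x} \<and> square_free w}"
    using v assms(2) sf_take[OF v(3)] set_take_subset[of n v] by auto
  then have "omega_minus x n \<noteq> 0" unfolding omega_minus_def
    using fin_words[of n x square_free] by (metis (no_types, lifting) card_0_eq empty_iff)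
  then show False using assms(1) by simp
qed

lemma omega_submult: "omega_minus x (m+n) \<le> omega_minus x m * omega_minus x n"
proof -
  let ?W = "\<lambda>k. {w :: nat list. length w = k \<and> set w \<subseteq> {..<x} \<and> square_free w}"
  have "card (?W (m+n)) \<le> card (?W m \<times> ?W n)"
  proof (rule card_inj_on_le[where f = "\<lambda>v. (take m v, drop m v)"])
    show "inj_on (\<lambda>v. (take m v, drop m v)) (?W (m+n))"
      by (rule inj_onI) (metis append_take_drop_id prod.inject)
    show "(\<lambda>v. (take m v, drop m v)) ` ?W (m+n) \<subseteq> ?W m \<times> ?W n"
    proof clarify
      fix v :: "nat list" assume v: "length v = m + n" "set v \<subseteq> {..<x}" "square_free v"
      have "square_free (drop m v)" using sf_factor[of "take m v" "drop m v" "[]"] v(3) by simp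
      then show "take m v \<in> ?W m \<and> drop m v \<in> ?W n"
        using v sf_take[OF v(3)] set_take_subset[of m v] set_drop_subset[of m v] by auto
    qed
    show "finite (?W m \<times> ?W n)" using fin_words by blast
  qed
  then show ?thesis unfolding omega_minus_def by (simp add: card_cartesian_product)
qed



lemma per_word:
  assumes v: "length v = n" "set v \<subseteq> {..<x}" "square_free v" and xn: "x \<le> n"
  shows "\<exists>u s. (length u = n \<and> set u = {..<x} \<and> square_free u) \<and>
               (set s \<subseteq> {..<x} \<and> length s \<le> x) \<and> v = drop (length s) u @ s"
proof -
  define M where "M = (\<lambda>j. {..<x} - set (take (n - j) v))"
  have "card (M x) \<le> card {..<x}" unfolding M_def by (intro card_mono) auto
  then have Mx: "card (M x) \<le> x" by simp
  define j where "j = (LEAST j. card (M j) \<le> j)"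
  have jM: "card (M j) \<le> j" unfolding j_def by (rule LeastI[of _ x]) (rule Mx)
  have jx: "j \<le> x" unfolding j_def by (rule Least_le) (rule Mx)
  have cj: "card (M j) = j"
  proof (cases j)
    case 0 then show ?thesis using jM by simp
  next
    case (Suc i)
    have "\<not> card (M i) \<le> i" using Suc j_def not_less_Least by (metis lessI)
    moreover have "M i \<subseteq> M j" unfolding M_def using Suc
      by (intro Diff_mono subset_refl set_take_subset_set_take) simp
    then have "card (M i) \<le> card (M j)" unfolding M_def by (intro card_mono) auto
    ultimately show ?thesis using jM Suc by simp
  qed
  define p where "p = take (n - j) v"
  define s where "s = drop (n - j) v"
  define l where "l = sorted_list_of_set (M j)"
  have fM: "finite (M j)" unfolding M_def by simp
  have ll: "length l = j" using cj fM unfolding l_def by simp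
  have sl: "set l = M j" using fM unfolding l_def by simp
  have lp: "length p = n - j" using v xn jx unfolding p_def by simp
  have ps: "set p \<subseteq> {..<x}" using v(2) set_take_subset[of "n-j" v] unfolding p_def by blast
  have ls: "length s = j" using v xn jx unfolding s_def by simp
  have "square_free (l @ p)"
    by (rule sf_prefix_distinct) (auto simp: l_def sl M_def p_def intro: sf_take v(3))
  moreover have "length (l @ p) = n" using ll lp jx xn by simp
  moreover have "set (l @ p) = {..<x}" using sl ps unfolding M_def p_def by auto
  moreover have "set s \<subseteq> {..<x} \<and> length s \<le> x"
    using v(2) set_drop_subset[of "n-j" v] ls jx unfolding s_def by auto
  moreover have "v = drop (length s) (l @ p) @ s" using ls ll unfolding p_def s_def by simp
  ultimately show ?thesis by blast
qed

lemma omega_le_psi: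
  assumes "x \<le> n"
  shows "omega_minus x n \<le> psi x n * card {s :: nat list. set s \<subseteq> {..<x} \<and> length s \<le> x}"
proof -
  let ?O = "{w :: nat list. length w = n \<and> set w \<subseteq> {..<x} \<and> square_free w}"
  let ?P = "{w :: nat list. length w = n \<and> set w = {..<x} \<and> square_free w}"
  let ?T = "{s :: nat list. set s \<subseteq> {..<x} \<and> length s \<le> x}"
  define f where "f = (\<lambda>v. SOME us. fst us \<in> ?P \<and> snd us \<in> ?T \<and> v = drop (length (snd us)) (fst us) @ snd us)"
  have fp: "fst (f v) \<in> ?P \<and> snd (f v) \<in> ?T \<and> v = drop (length (snd (f v))) (fst (f v)) @ snd (f v)"
    if "v \<in> ?O" for v
  proof -
    have vv: "length v = n" "set v \<subseteq> {..<x}" "square_free v" using that by auto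
    obtain u s where "(length u = n \<and> set u = {..<x} \<and> square_free u) \<and>
               (set s \<subseteq> {..<x} \<and> length s \<le> x) \<and> v = drop (length s) u @ s"
      using per_word[OF vv assms] by blast
    then have "\<exists>us. fst us \<in> ?P \<and> snd us \<in> ?T \<and> v = drop (length (snd us)) (fst us) @ snd us"
      by (intro exI[of _ "(u,s)"]) auto
    then show ?thesis unfolding f_def by (rule someI_ex)
  qed
  have "card ?O \<le> card (?P \<times> ?T)"
  proof (rule card_inj_on_le[where f = f])
    show "inj_on f ?O"
    proof (rule inj_onI)
      fix v w assume vO: "v \<in> ?O" and wO: "w \<in> ?O" and fe: "f v = f w"
      have e1: "v = drop (length (snd (f v))) (fst (f v)) @ snd (f v)" using fp[OF vO] by blast
      have e2: "w = drop (length (snd (f w))) (fst (f w)) @ snd (f w)" using fp[OF wO] by blast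
      show "v = w" using e1 e2 fe by simp
    qed
    show "f ` ?O \<subseteq> ?P \<times> ?T"
    proof
      fix y assume "y \<in> f ` ?O"
      then obtain v where vO: "v \<in> ?O" and y: "y = f v" by blast
      have "fst (f v) \<in> ?P" "snd (f v) \<in> ?T" using fp[OF vO] by blast+
      then show "y \<in> ?P \<times> ?T" using y by (simp add: mem_Times_iff)
    qed
    have "finite ?P" using fin_words[of n x "\<lambda>w. set w = {..<x} \<and> square_free w"]
      by (rule finite_subset[rotated]) auto
    moreover have "finite ?T" by (rule finite_lists_length_le) simp
    ultimately show "finite (?P \<times> ?T)" by blast
  qed
  then show ?thesis unfolding omega_minus_def psi_def by (simp add: card_cartesian_product)
qed



theorem mainTheorem8:
  fixes x :: nat
  assumes "x \<ge> 3"
  shows "\<exists>L::real. (\<lambda>n. ln (real (psi x n)) / real n) \<longlonglongrightarrow> L \<and>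
                   (\<lambda>n. ln (real (omega_minus x n)) / real n) \<longlonglongrightarrow> L"
proof (cases "\<exists>n. omega_minus x n = 0")
  case True
  then obtain n0 where n0: "omega_minus x n0 = 0" by blast
  have ev: "\<forall>m\<ge>n0. omega_minus x m = 0 \<and> psi x m = 0"
    using omega_zero_mono[OF n0] psi_le_omega by (metis le_zero_eq)
  have "(\<lambda>n. ln (real (psi x n)) / real n) \<longlonglongrightarrow> 0"
    by (rule tendsto_eventually) (unfold eventually_sequentially, rule exI[of _ n0], simp add: ev)
  moreover have "(\<lambda>n. ln (real (omega_minus x n)) / real n) \<longlonglongrightarrow> 0"
    by (rule tendsto_eventually) (unfold eventually_sequentially, rule exI[of _ n0], simp add: ev)
  ultimately show ?thesis by blast
next
  case False
  then have pos: "omega_minus x n \<ge> 1" for n by (simp add: Suc_le_eq)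
  define a where "a = (\<lambda>n. ln (real (omega_minus x n)))"
  have "\<exists>L. (\<lambda>n. a n / real n) \<longlonglongrightarrow> L"
  proof (rule fekete)
    fix m n
    have "real (omega_minus x (m+n)) \<le> real (omega_minus x m) * real (omega_minus x n)"
      using omega_submult by (metis of_nat_le_iff of_nat_mult)
    then have "ln (real (omega_minus x (m+n))) \<le> ln (real (omega_minus x m) * real (omega_minus x n))"
      using pos[of "m+n"] by (intro ln_mono) auto
    also have "\<dots> = ln (real (omega_minus x m)) + ln (real (omega_minus x n))"
      using pos[of m] pos[of n] by (simp add: ln_mult)
    finally show "a (m+n) \<le> a m + a n" unfolding a_def .
  next
    fix n show "a n \<ge> 0" unfolding a_def using pos[of n] by simp
  qed
  then obtain L where L: "(\<lambda>n. a n / real n) \<longlonglongrightarrow> L" by blast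
  define C where "C = card {s :: nat list. set s \<subseteq> {..<x} \<and> length s \<le> x}"
  have C1: "C \<ge> 1"
  proof -
    have "finite {s :: nat list. set s \<subseteq> {..<x} \<and> length s \<le> x}"
      by (rule finite_lists_length_le) simp
    moreover have "[] \<in> {s :: nat list. set s \<subseteq> {..<x} \<and> length s \<le> x}" by simp
    ultimately show ?thesis unfolding C_def by (metis One_nat_def Suc_leI card_gt_0_iff empty_iff)
  qed
  have lo: "(a n - ln (real C)) / real n \<le> ln (real (psi x n)) / real n" if "n \<ge> x" for n
  proof -
    have "omega_minus x n \<le> psi x n * C" using omega_le_psi[OF that] unfolding C_def .
    then have r: "real (omega_minus x n) \<le> real (psi x n) * real C" by (metis of_nat_le_iff of_nat_mult)
    have pp: "psi x n \<ge> 1" using \<open>omega_minus x n \<le> psi x n * C\<close> pos[of n]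
      by (metis One_nat_def Suc_leI mult_is_0 not_gr0 le_zero_eq not_one_le_zero)
    have "a n \<le> ln (real (psi x n) * real C)" unfolding a_def using r pos[of n] by (intro ln_mono) auto
    also have "\<dots> = ln (real (psi x n)) + ln (real C)" using pp C1 by (simp add: ln_mult)
    finally show ?thesis by (intro divide_right_mono) auto
  qed
  have hi: "ln (real (psi x n)) / real n \<le> a n / real n" for n
  proof -
    have "ln (real (psi x n)) \<le> a n"
    proof (cases "psi x n = 0")
      case True then show ?thesis unfolding a_def using pos[of n] by simp
    next
      case False then show ?thesis unfolding a_def using psi_le_omega[of x n] by (intro ln_mono) auto
    qed
    then show ?thesis by (intro divide_right_mono) auto
  qed
  have "(\<lambda>n. a n / real n - ln (real C) / real n) \<longlonglongrightarrow> L - 0"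
    by (intro tendsto_diff L lim_const_over_n)
  then have L2: "(\<lambda>n. (a n - ln (real C)) / real n) \<longlonglongrightarrow> L" by (simp add: diff_divide_distrib)
  have "(\<lambda>n. ln (real (psi x n)) / real n) \<longlonglongrightarrow> L"
    by (rule tendsto_sandwich[OF _ _ L2 L]) (auto simp: eventually_sequentially intro: lo hi)
  then show ?thesis using L unfolding a_def by blast
qed


end
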